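(* Let $r\ge 2$ and, for $1\le j\le r$, let $(\alpha^{[j]}_{h})_{h\in\mathbb{N}}$ be sequences of positive reals with $\alpha^{[j]}_h\neq\alpha^{[j]}_\ell$ for $1\le h<\ell<\infty$, and set $\alpha^{[j]}_0=0$. In the $r$-type urn model I with these weights, started from $\mathbf{n}=(n_1,\dots,n_r)$ with all $n_j\ge1$, let $\mathbf{X}_{\mathbf{n}}=(X^{[1]}_{\mathbf{n}},\dots,X^{[r-1]}_{\mathbf{n}})$. Then for all $\mathbf{k}=(k_1,\dots,k_{r-1})$ with $0\le k_j\le n_j$, \[ \mathbb{P}\{\mathbf{X}_{\mathbf{n}}=\mathbf{k}\}=\sum_{\ell_1=k_1}^{n_1}\cdots\sum_{\ell_{r-1}=k_{r-1}}^{n_{r-1}}\frac{\Big(\prod_{f=1}^{n_r}\alpha^{[r]}_f\Big)\prod_{j=1}^{r-1}\Big(\prod_{h_j=k_j+1}^{n_j}\alpha^{[j]}_{h_j}\Big)}{\Big(\prod_{f=1}^{n_r}\big(\alpha^{[r]}_f+\sum_{j=1}^{r-1}\alpha^{[j]}_{\ell_j}\big)\Big)\prod_{j=1}^{r-1}\Big(\prod_{\substack{h_j=k_j\\ h_j\neq\ell_j}}^{n_j}\big(\alpha^{[j]}_{h_j}-\alpha^{[j]}_{\ell_j}\big)\Big)}. \]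
   Context: $r$-type urn model I: the urn contains balls of types $1,\dots,r$, initially $n_j$ balls of type $j$. At each step, if the urn contains $n'_j$ balls of type $j$ ($1\le j\le r$), a ball of type $\ell$ is drawn with probability $\alpha^{[\ell]}_{n'_\ell}/\sum_{j=1}^{r}\alpha^{[j]}_{n'_j}$ and discarded. The process stops when either all type $r$ balls have been drawn or all balls of types $1,\dots,r-1$ have been drawn (absorbing states $(n'_1,\dots,n'_{r-1},0)$ and $(0,\dots,0,n'_r)$). $X^{[j]}_{\mathbf{n}}$ is the number of type $j$ balls in the urn when the process stops. Empty products equal $1$. *)

theory Defs
  imports Complex_Main "HOL-Library.FuncSet"
begin

text \<open>Urn model I with types 1..r.  A state is a function s :: nat => nat, s j being
  the number of balls of type j (only j in {1..r} matters).  alpha j h is the weight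
  alpha^[j]_h.\<close>

definition urn_stopped :: "nat \<Rightarrow> (nat \<Rightarrow> nat) \<Rightarrow> bool" where
  "urn_stopped r s \<longleftrightarrow> s r = 0 \<or> (\<forall>j\<in>{1..r-1}. s j = 0)"

text \<open>urn_absorb r alpha m s E: probability that the process started in state s
  stops in a state satisfying E (m is a step budget; m = total number of balls
  suffices, since each step removes one ball).\<close>

fun urn_absorb :: "nat \<Rightarrow> (nat \<Rightarrow> nat \<Rightarrow> real) \<Rightarrow> nat \<Rightarrow> (nat \<Rightarrow> nat)
                   \<Rightarrow> ((nat \<Rightarrow> nat) \<Rightarrow> bool) \<Rightarrow> real" where
  "urn_absorb r \<alpha> 0 s E = (if E s then 1 else 0)"
| "urn_absorb r \<alpha> (Suc m) s E =
     (if urn_stopped r s then (if E s then 1 else 0)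
      else (\<Sum>l\<in>{1..r}. \<alpha> l (s l) / (\<Sum>j\<in>{1..r}. \<alpha> j (s j))
                          * urn_absorb r \<alpha> m (s(l := s l - 1)) E))"

definition urn_prob_X :: "nat \<Rightarrow> (nat \<Rightarrow> nat \<Rightarrow> real) \<Rightarrow> (nat \<Rightarrow> nat) \<Rightarrow> (nat \<Rightarrow> nat) \<Rightarrow> real" where
  "urn_prob_X r \<alpha> n k =
     urn_absorb r \<alpha> (\<Sum>j\<in>{1..r}. n j) n (\<lambda>s. \<forall>j\<in>{1..r-1}. s j = k j)"

end

theory Submission imports Defs "HOL-Computational_Algebra.Polynomial" begin

lemma lagrange_zero:
  fixes x :: "nat \<Rightarrow> real"
  assumes fin: "finite A" and inj: "inj_on x A" and c2: "card A \<ge> 2"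
  shows "(\<Sum>i\<in>A. 1 / (\<Prod>j\<in>A-{i}. x j - x i)) = 0"
proof -
  define P where "P i = (\<Prod>j\<in>A-{i}. [:-x j, 1:])" for i
  define c where "c i = 1/(\<Prod>j\<in>A-{i}. x i - x j)" for i
  define p where "p = (\<Sum>i\<in>A. smult (c i) (P i))"
  have degP: "degree (P i) = card A - 1" if "i \<in> A" for i
  proof -
    have "degree (P i) = (\<Sum>j\<in>A-{i}. degree [:-x j, 1:])"
      unfolding P_def by (rule degree_prod_eq_sum_degree) auto
    also have "\<dots> = card (A - {i})" by simp
    finally show ?thesis using that fin by simp
  qed
  have lcP: "lead_coeff (P i) = 1" for i
    unfolding P_def lead_coeff_prod by simp
  have degp: "degree p \<le> card A - 1"
    unfolding p_def
    by (rule degree_sum_le) (use fin in \<open>auto intro: order.trans[OF degree_smult_le] simp: degP\<close>)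
  have polyp: "poly p (x l) = 1" if l: "l \<in> A" for l
  proof -
    have "poly p (x l) = (\<Sum>i\<in>A. c i * poly (P i) (x l))"
      unfolding p_def by (simp add: poly_sum)
    also have "\<dots> = c l * poly (P l) (x l) + (\<Sum>i\<in>A-{l}. c i * poly (P i) (x l))"
      by (rule sum.remove[OF fin l])
    also have "(\<Sum>i\<in>A-{l}. c i * poly (P i) (x l)) = 0"
    proof (rule sum.neutral, rule ballI)
        fix i assume i: "i \<in> A - {l}"
        have "poly (P i) (x l) = (\<Prod>j\<in>A-{i}. x l - x j)" unfolding P_def poly_prod by simp
        also have "\<dots> = 0" using i l fin by (intro prod_zero) auto
        finally show "c i * poly (P i) (x l) = 0" by simp
    qed
    also have "c l * poly (P l) (x l) + 0 = c l * poly (P l) (x l)" by simp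
    also have "\<dots> = 1"
    proof -
      have "(\<Prod>j\<in>A-{l}. x l - x j) \<noteq> 0"
        using fin inj l by (auto simp: inj_on_def)
      thus ?thesis unfolding c_def P_def poly_prod by simp
    qed
    finally show ?thesis .
  qed
  have "p = 1"
  proof (rule poly_eqI_degree[of "x ` A"])
    show "\<And>y. y \<in> x ` A \<Longrightarrow> poly p y = poly 1 y" using polyp by auto
    show "degree p < card (x ` A)" using degp c2 card_image[OF inj] by simp
    show "degree (1::real poly) < card (x ` A)" using c2 card_image[OF inj] by simp
  qed
  hence "coeff p (card A - 1) = 0" using c2 by simp
  moreover have "coeff p (card A - 1) = (\<Sum>i\<in>A. c i)"
    unfolding p_def coeff_sum
  proof (rule sum.cong)
    fix i assume "i \<in> A"
    hence "coeff (P i) (card A - 1) = 1" using lcP[of i] degP[of i] by simp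
    thus "coeff (smult (c i) (P i)) (card A - 1) = c i" by simp
  qed simp
  ultimately have z: "(\<Sum>i\<in>A. c i) = 0" by simp
  have "(\<Sum>i\<in>A. 1 / (\<Prod>j\<in>A-{i}. x j - x i)) = (\<Sum>i\<in>A. (-1)^(card A - 1) * c i)"
  proof (rule sum.cong)
    fix i assume i: "i \<in> A"
    have "(\<Prod>j\<in>A-{i}. x j - x i) = (\<Prod>j\<in>A-{i}. - (x i - x j))" by simp
    also have "\<dots> = (-1)^card (A-{i}) * (\<Prod>j\<in>A-{i}. x i - x j)" by (rule prod_uminus)
    finally show "1 / (\<Prod>j\<in>A-{i}. x j - x i) = (-1)^(card A - 1) * c i"
      using i fin by (simp add: c_def) (cases "even (card A - 1)"; simp)
  qed simp
  also have "\<dots> = 0" by (simp add: sum_distrib_left[symmetric] z)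
  finally show ?thesis .
qed

definition NN :: "(nat\<Rightarrow>nat\<Rightarrow>real) \<Rightarrow> (nat\<Rightarrow>nat) \<Rightarrow> nat \<Rightarrow> nat \<Rightarrow> real" where
  "NN \<alpha> k j m = (\<Prod>h\<in>{k j+1..m}. \<alpha> j h)"
definition QQ :: "(nat\<Rightarrow>nat\<Rightarrow>real) \<Rightarrow> (nat\<Rightarrow>nat) \<Rightarrow> nat \<Rightarrow> nat \<Rightarrow> nat \<Rightarrow> real" where
  "QQ \<alpha> k j m l = (\<Prod>h\<in>{k j..m}-{l}. \<alpha> j h - \<alpha> j l)"
definition AA :: "nat \<Rightarrow> (nat\<Rightarrow>nat\<Rightarrow>real) \<Rightarrow> nat \<Rightarrow> real" where
  "AA r \<alpha> m = (\<Prod>f\<in>{1..m}. \<alpha> r f)"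
definition DD :: "nat \<Rightarrow> (nat\<Rightarrow>nat\<Rightarrow>real) \<Rightarrow> nat \<Rightarrow> real \<Rightarrow> real" where
  "DD r \<alpha> m \<sigma> = (\<Prod>f\<in>{1..m}. \<alpha> r f + \<sigma>)"
definition sig :: "nat \<Rightarrow> (nat\<Rightarrow>nat\<Rightarrow>real) \<Rightarrow> (nat \<Rightarrow> nat) \<Rightarrow> real" where
  "sig r \<alpha> L = (\<Sum>j\<in>{1..r-1}. \<alpha> j (L j))"
definition TT :: "nat \<Rightarrow> (nat\<Rightarrow>nat\<Rightarrow>real) \<Rightarrow> (nat\<Rightarrow>nat) \<Rightarrow> (nat\<Rightarrow>nat) \<Rightarrow> (nat\<Rightarrow>nat) \<Rightarrow> real" where
  "TT r \<alpha> k s L = AA r \<alpha> (s r) * (\<Prod>j\<in>{1..r-1}. NN \<alpha> k j (s j))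
     / (DD r \<alpha> (s r) (sig r \<alpha> L) * (\<Prod>j\<in>{1..r-1}. QQ \<alpha> k j (s j) (L j)))"
definition FF :: "nat \<Rightarrow> (nat\<Rightarrow>nat\<Rightarrow>real) \<Rightarrow> (nat\<Rightarrow>nat) \<Rightarrow> (nat\<Rightarrow>nat) \<Rightarrow> real" where
  "FF r \<alpha> k s = (\<Sum>L\<in>Pi\<^sub>E {1..r-1} (\<lambda>j. {k j..s j}). TT r \<alpha> k s L)"

context
  fixes r :: nat and \<alpha> :: "nat \<Rightarrow> nat \<Rightarrow> real" and k :: "nat \<Rightarrow> nat"
  assumes r2: "r \<ge> 2"
    and pos: "\<And>j h. j \<in> {1..r} \<Longrightarrow> h \<ge> 1 \<Longrightarrow> \<alpha> j h > 0"
    and dist: "\<And>j h l. j \<in> {1..r} \<Longrightarrow> 1 \<le> h \<Longrightarrow> h < l \<Longrightarrow> \<alpha> j h \<noteq> \<alpha> j l"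
    and a0: "\<And>j. j \<in> {1..r} \<Longrightarrow> \<alpha> j 0 = 0"
begin

lemma dist_all: "j \<in> {1..r} \<Longrightarrow> h \<noteq> l \<Longrightarrow> \<alpha> j h \<noteq> \<alpha> j l"
proof -
  assume j: "j \<in> {1..r}" and hl: "h \<noteq> l"
  have *: "\<alpha> j a \<noteq> \<alpha> j b" if "a < b" for a b
  proof (cases "a = 0")
    case True thus ?thesis using pos[OF j, of b] a0[OF j] that by auto
  next
    case False thus ?thesis using dist[OF j, of a b] that by auto
  qed
  show ?thesis using hl *[of h l] *[of l h] by (cases "h < l") auto
qed

lemma nonneg: "j \<in> {1..r} \<Longrightarrow> \<alpha> j h \<ge> 0"
  using pos[of j h] a0[of j] by (cases "h = 0") force+

lemma QQ_nz: "j \<in> {1..r} \<Longrightarrow> QQ \<alpha> k j m l \<noteq> 0"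
  unfolding QQ_def using dist_all by (auto simp: prod_zero_iff)

lemma sig_nonneg: "sig r \<alpha> L \<ge> 0"
  unfolding sig_def using nonneg r2 by (intro sum_nonneg) auto

lemma DD_nz: "\<sigma> \<ge> 0 \<Longrightarrow> DD r \<alpha> m \<sigma> \<noteq> 0"
  unfolding DD_def using pos[of r] r2
  by (auto simp: prod_zero_iff) (metis add_pos_nonneg order.refl less_irrefl)

lemma AA_nz: "AA r \<alpha> m \<noteq> 0"
  unfolding AA_def using pos[of r] r2 by (auto simp: prod_zero_iff) force

lemma G_lemma:
  assumes j: "j \<in> {1..r}"
  shows "(\<Sum>L\<in>{k j..m}. NN \<alpha> k j m / QQ \<alpha> k j m L) = (if m = k j then 1 else 0)"
proof (cases "m < k j")
  case True thus ?thesis by simp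
next
  case False
  show ?thesis
  proof (cases "m = k j")
    case True thus ?thesis by (simp add: NN_def QQ_def)
  next
    case False
    with \<open>\<not> m < k j\<close> have gt: "m > k j" by simp
    have "(\<Sum>L\<in>{k j..m}. NN \<alpha> k j m / QQ \<alpha> k j m L)
        = NN \<alpha> k j m * (\<Sum>L\<in>{k j..m}. 1 / (\<Prod>h\<in>{k j..m}-{L}. \<alpha> j h - \<alpha> j L))"
      by (simp add: sum_distrib_left QQ_def)
    also have "(\<Sum>L\<in>{k j..m}. 1 / (\<Prod>h\<in>{k j..m}-{L}. \<alpha> j h - \<alpha> j L)) = 0"
      by (rule lagrange_zero) (use gt dist_all[OF j] in \<open>auto simp: inj_on_def\<close>)
    finally show ?thesis using False by simp
  qed
qed

lemma stop_r:
  assumes sr: "s r = 0"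
  shows "FF r \<alpha> k s = (if (\<forall>j\<in>{1..r-1}. s j = k j) then 1 else 0)"
proof -
  have "FF r \<alpha> k s = (\<Sum>L\<in>Pi\<^sub>E {1..r-1} (\<lambda>j. {k j..s j}).
           \<Prod>j\<in>{1..r-1}. NN \<alpha> k j (s j) / QQ \<alpha> k j (s j) (L j))"
    unfolding FF_def TT_def AA_def DD_def using sr by (simp add: prod_dividef)
  also have "\<dots> = (\<Prod>j\<in>{1..r-1}. \<Sum>l\<in>{k j..s j}. NN \<alpha> k j (s j) / QQ \<alpha> k j (s j) l)"
    by (rule prod_sum_PiE[symmetric]) auto
  also have "\<dots> = (\<Prod>j\<in>{1..r-1}. (if s j = k j then 1 else 0))"
  proof (rule prod.cong[OF refl])
    fix j assume "j \<in> {1..r-1}" hence "j \<in> {1..r}" by auto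
    thus "(\<Sum>l\<in>{k j..s j}. NN \<alpha> k j (s j) / QQ \<alpha> k j (s j) l) = (if s j = k j then 1 else 0)"
      by (rule G_lemma)
  qed
  also have "\<dots> = (if (\<forall>j\<in>{1..r-1}. s j = k j) then 1 else 0)"
    by (auto simp: prod_zero_iff)
  finally show ?thesis .
qed

lemma stop_all:
  assumes z: "\<forall>j\<in>{1..r-1}. s j = 0"
  shows "FF r \<alpha> k s = (if (\<forall>j\<in>{1..r-1}. s j = k j) then 1 else 0)"
proof (cases "\<forall>j\<in>{1..r-1}. k j = 0")
  case False
  then obtain j where j: "j \<in> {1..r-1}" "k j \<noteq> 0" by auto
  hence "Pi\<^sub>E {1..r-1} (\<lambda>j. {k j..s j}) = {}" using z by (auto simp: PiE_eq_empty_iff)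
  thus ?thesis using j z unfolding FF_def by auto
next
  case True
  have T1: "TT r \<alpha> k s L = 1" if L: "L \<in> Pi\<^sub>E {1..r-1} (\<lambda>j. {k j..s j})" for L
  proof -
    have L0: "L j = 0" if "j \<in> {1..r-1}" for j using L that z True by (auto simp: PiE_iff)
    have "sig r \<alpha> L = 0" unfolding sig_def using L0 a0 by (intro sum.neutral) auto
    moreover have "NN \<alpha> k j (s j) = 1" if "j \<in> {1..r-1}" for j
      using z True that by (simp add: NN_def)
    moreover have "QQ \<alpha> k j (s j) (L j) = 1" if "j \<in> {1..r-1}" for j
      using z True that L0[OF that] by (simp add: QQ_def)
    ultimately show ?thesis unfolding TT_def using AA_nz
      by (simp add: AA_def DD_def)
  qed
  have "FF r \<alpha> k s = (\<Sum>L\<in>Pi\<^sub>E {1..r-1} (\<lambda>j. {k j..s j}). 1)"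
    unfolding FF_def by (rule sum.cong) (auto simp: T1)
  also have "\<dots> = 1" using z True by (simp add: card_PiE)
  finally show ?thesis using z True by simp
qed


lemma upd_eq: "j \<in> {1..r-1} \<Longrightarrow> (s(r := x)) j = s j"
  using r2 by auto

lemma step_r:
  assumes sr: "s r \<ge> 1"
  shows "\<alpha> r (s r) * FF r \<alpha> k (s(r := s r - 1)) =
         \<alpha> r (s r) * FF r \<alpha> k s + (\<Sum>L\<in>Pi\<^sub>E {1..r-1} (\<lambda>j. {k j..s j}). sig r \<alpha> L * TT r \<alpha> k s L)"
proof -
  let ?s' = "s(r := s r - 1)"
  have P: "Pi\<^sub>E {1..r-1} (\<lambda>j. {k j..?s' j}) = Pi\<^sub>E {1..r-1} (\<lambda>j. {k j..s j})"
    by (rule PiE_cong) (use r2 in auto)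
  obtain m where m: "s r = Suc m" using sr by (cases "s r") auto
  have trm: "\<alpha> r (s r) * TT r \<alpha> k ?s' L = (\<alpha> r (s r) + sig r \<alpha> L) * TT r \<alpha> k s L" for L
  proof -
    have N: "(\<Prod>j\<in>{1..r-1}. NN \<alpha> k j (?s' j)) = (\<Prod>j\<in>{1..r-1}. NN \<alpha> k j (s j))"
      by (rule prod.cong) (use r2 in auto)
    have Q: "(\<Prod>j\<in>{1..r-1}. QQ \<alpha> k j (?s' j) (L j)) = (\<Prod>j\<in>{1..r-1}. QQ \<alpha> k j (s j) (L j))"
      by (rule prod.cong) (use r2 in auto)
    have A: "AA r \<alpha> (s r) = AA r \<alpha> m * \<alpha> r (s r)" unfolding AA_def m by (simp add: prod.cl_ivl_Suc)
    have D: "DD r \<alpha> (s r) (sig r \<alpha> L) = DD r \<alpha> m (sig r \<alpha> L) * (\<alpha> r (s r) + sig r \<alpha> L)"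
      unfolding DD_def m by (simp add: prod.cl_ivl_Suc)
    have pz: "\<alpha> r (s r) + sig r \<alpha> L \<noteq> 0"
      using pos[of r "s r"] sr r2 sig_nonneg[of L] by auto
    have qz: "(\<Prod>j\<in>{1..r-1}. QQ \<alpha> k j (s j) (L j)) \<noteq> 0"
      using QQ_nz by (auto simp: prod_zero_iff)
    have dz: "DD r \<alpha> m (sig r \<alpha> L) \<noteq> 0" using DD_nz sig_nonneg by blast
    have eq: "?s' r = m" using m by simp
    have alg: "a * (A' * X / (D' * Y)) = e * (A' * a * X / (D' * e * Y))"
      if "e \<noteq> 0" "D' \<noteq> 0" "Y \<noteq> 0" for a A' X D' Y e :: real
      using that by (simp add: field_simps)
    show ?thesis unfolding TT_def N Q eq A D by (rule alg[OF pz dz qz])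
  qed
  have "\<alpha> r (s r) * FF r \<alpha> k ?s' = (\<Sum>L\<in>Pi\<^sub>E {1..r-1} (\<lambda>j. {k j..s j}). (\<alpha> r (s r) + sig r \<alpha> L) * TT r \<alpha> k s L)"
    unfolding FF_def P sum_distrib_left trm ..
  also have "\<dots> = \<alpha> r (s r) * FF r \<alpha> k s + (\<Sum>L\<in>Pi\<^sub>E {1..r-1} (\<lambda>j. {k j..s j}). sig r \<alpha> L * TT r \<alpha> k s L)"
    unfolding FF_def by (simp add: distrib_right sum.distrib sum_distrib_left)
  finally show ?thesis .
qed


lemma step_j:
  assumes j: "j \<in> {1..r-1}"
  shows "\<alpha> j (s j) * FF r \<alpha> k (s(j := s j - 1))
          + (\<Sum>L\<in>Pi\<^sub>E {1..r-1} (\<lambda>j. {k j..s j}). \<alpha> j (L j) * TT r \<alpha> k s L)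
         = \<alpha> j (s j) * FF r \<alpha> k s"
proof (cases "s j = 0")
  case True
  have jr: "j \<in> {1..r}" using j by auto
  have "(\<Sum>L\<in>Pi\<^sub>E {1..r-1} (\<lambda>j. {k j..s j}). \<alpha> j (L j) * TT r \<alpha> k s L) = 0"
  proof (rule sum.neutral, rule ballI)
    fix L assume "L \<in> Pi\<^sub>E {1..r-1} (\<lambda>j. {k j..s j})"
    hence "L j \<le> s j" using j by (simp add: PiE_iff)
    hence "L j = 0" using True by simp
    thus "\<alpha> j (L j) * TT r \<alpha> k s L = 0" using a0[OF jr] by simp
  qed
  thus ?thesis using True a0[OF jr] by simp
next
  case False
  have jr: "j \<in> {1..r}" using j by auto
  have jnr: "j \<noteq> r" using j r2 by auto
  let ?s' = "s(j := s j - 1)"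
  let ?P = "Pi\<^sub>E {1..r-1} (\<lambda>j. {k j..s j})"
  have Pset: "Pi\<^sub>E {1..r-1} (\<lambda>i. {k i..?s' i}) = {L \<in> ?P. L j \<noteq> s j}"
  proof (intro set_eqI iffI)
    fix L assume "L \<in> Pi\<^sub>E {1..r-1} (\<lambda>i. {k i..?s' i})"
    hence L: "\<forall>i\<in>{1..r-1}. L i \<in> {k i..?s' i}" "L \<in> extensional {1..r-1}" by (auto simp: PiE_iff)
    have "\<forall>i\<in>{1..r-1}. L i \<in> {k i..s i}"
    proof
      fix i assume i: "i \<in> {1..r-1}"
      show "L i \<in> {k i..s i}" using L(1) i by (cases "i = j") (auto dest: bspec[of _ _ i])
    qed
    moreover have "L j \<noteq> s j" using L(1) j False by (auto dest: bspec[of _ _ j])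
    ultimately show "L \<in> {L \<in> ?P. L j \<noteq> s j}" using L(2) by (simp add: PiE_iff)
  next
    fix L assume L: "L \<in> {L \<in> ?P. L j \<noteq> s j}"
    show "L \<in> Pi\<^sub>E {1..r-1} (\<lambda>i. {k i..?s' i})"
      unfolding PiE_iff
    proof (intro conjI ballI)
      fix i assume i: "i \<in> {1..r-1}"
      have a: "L i \<in> {k i..s i}" using L i by (auto simp: PiE_iff)
      have b: "L j \<noteq> s j" using L by simp
      show "L i \<in> {k i..?s' i}"
        using a b by (cases "i = j") auto
    qed (use L in \<open>auto simp: PiE_iff\<close>)
  qed
  have trm: "\<alpha> j (s j) * TT r \<alpha> k ?s' L = (\<alpha> j (s j) - \<alpha> j (L j)) * TT r \<alpha> k s L"
    if L: "L \<in> ?P" "L j \<noteq> s j" for L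
  proof -
    have "L j \<in> {k j..s j}" using L(1) j by (simp add: PiE_iff)
    hence Lj: "k j \<le> L j" "L j < s j" using L(2) by auto
    then obtain m where m: "s j = Suc m" "k j \<le> m" by (cases "s j") auto
    let ?I = "{1..r-1}"
    have fin: "finite ?I" by simp
    have N': "(\<Prod>i\<in>?I. NN \<alpha> k i (?s' i)) = NN \<alpha> k j m * (\<Prod>i\<in>?I-{j}. NN \<alpha> k i (s i))"
    proof -
      have r1: "(\<Prod>i\<in>?I-{j}. NN \<alpha> k i (?s' i)) = (\<Prod>i\<in>?I-{j}. NN \<alpha> k i (s i))"
        by (rule prod.cong) auto
      show ?thesis using prod.remove[OF fin j, of "\<lambda>i. NN \<alpha> k i (?s' i)"] m r1 by simp
    qed
    have N: "(\<Prod>i\<in>?I. NN \<alpha> k i (s i)) = NN \<alpha> k j m * \<alpha> j (s j) * (\<Prod>i\<in>?I-{j}. NN \<alpha> k i (s i))"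
    proof -
      have "NN \<alpha> k j (s j) = NN \<alpha> k j m * \<alpha> j (s j)"
        unfolding NN_def m using m by (simp add: prod.cl_ivl_Suc)
      thus ?thesis using prod.remove[OF fin j, of "\<lambda>i. NN \<alpha> k i (s i)"] by simp
    qed
    have Q': "(\<Prod>i\<in>?I. QQ \<alpha> k i (?s' i) (L i)) = QQ \<alpha> k j m (L j) * (\<Prod>i\<in>?I-{j}. QQ \<alpha> k i (s i) (L i))"
    proof -
      have r1: "(\<Prod>i\<in>?I-{j}. QQ \<alpha> k i (?s' i) (L i)) = (\<Prod>i\<in>?I-{j}. QQ \<alpha> k i (s i) (L i))"
        by (rule prod.cong) auto
      show ?thesis using prod.remove[OF fin j, of "\<lambda>i. QQ \<alpha> k i (?s' i) (L i)"] m r1 by simp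
    qed
    have Q: "(\<Prod>i\<in>?I. QQ \<alpha> k i (s i) (L i)) = QQ \<alpha> k j m (L j) * (\<alpha> j (s j) - \<alpha> j (L j)) * (\<Prod>i\<in>?I-{j}. QQ \<alpha> k i (s i) (L i))"
    proof -
      have e: "{k j..Suc m} - {L j} = insert (Suc m) ({k j..m} - {L j})" using m Lj by auto
      have "QQ \<alpha> k j (s j) (L j) = QQ \<alpha> k j m (L j) * (\<alpha> j (s j) - \<alpha> j (L j))"
        unfolding QQ_def m e by (simp add: mult.commute)
      thus ?thesis using prod.remove[OF fin j, of "\<lambda>i. QQ \<alpha> k i (s i) (L i)"] by simp
    qed
    have sr: "?s' r = s r" using jnr by simp
    have cz: "\<alpha> j (s j) - \<alpha> j (L j) \<noteq> 0" using dist_all[OF jr, of "s j" "L j"] Lj by auto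
    have dz: "DD r \<alpha> (s r) (sig r \<alpha> L) \<noteq> 0" using DD_nz sig_nonneg by blast
    have qz1: "QQ \<alpha> k j m (L j) \<noteq> 0" using QQ_nz[OF jr] .
    have qz2: "(\<Prod>i\<in>?I-{j}. QQ \<alpha> k i (s i) (L i)) \<noteq> 0" using QQ_nz by (auto simp: prod_zero_iff)
    have alg: "a * (A' * (N0 * X) / (D' * (Q0 * Y))) = c * (A' * (N0 * a * X) / (D' * (Q0 * c * Y)))"
      if "c \<noteq> 0" "D' \<noteq> 0" "Q0 \<noteq> 0" "Y \<noteq> 0" for a A' N0 X D' Q0 Y c :: real
      using that by (simp add: field_simps)
    show ?thesis unfolding TT_def N N' Q Q' sr by (rule alg[OF cz dz qz1 qz2])
  qed
  have "\<alpha> j (s j) * FF r \<alpha> k s - (\<Sum>L\<in>?P. \<alpha> j (L j) * TT r \<alpha> k s L)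
        = (\<Sum>L\<in>?P. (\<alpha> j (s j) - \<alpha> j (L j)) * TT r \<alpha> k s L)"
    unfolding FF_def by (simp add: sum_distrib_left sum_subtractf left_diff_distrib)
  also have "\<dots> = (\<Sum>L\<in>?P. if L j \<noteq> s j then \<alpha> j (s j) * TT r \<alpha> k ?s' L else 0)"
    by (rule sum.cong) (auto simp: trm[symmetric])
  also have "\<dots> = (\<Sum>L\<in>{L \<in> ?P. L j \<noteq> s j}. \<alpha> j (s j) * TT r \<alpha> k ?s' L)"
    by (rule sum.inter_filter[symmetric]) (simp add: finite_PiE)
  also have "\<dots> = \<alpha> j (s j) * FF r \<alpha> k ?s'"
    unfolding FF_def Pset[symmetric] sum_distrib_left ..
  finally show ?thesis by simp
qed


lemma recur:
  assumes sr: "s r \<ge> 1"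
  shows "(\<Sum>l\<in>{1..r}. \<alpha> l (s l) * FF r \<alpha> k (s(l := s l - 1))) = (\<Sum>l\<in>{1..r}. \<alpha> l (s l)) * FF r \<alpha> k s"
proof -
  have spl: "{1..r} = insert r {1..r-1}" using r2 by auto
  have rn: "r \<notin> {1..r-1}" using r2 by auto
  let ?P = "Pi\<^sub>E {1..r-1} (\<lambda>j. {k j..s j})"
  have "(\<Sum>l\<in>{1..r-1}. \<alpha> l (s l) * FF r \<alpha> k (s(l := s l - 1)))
      = (\<Sum>l\<in>{1..r-1}. \<alpha> l (s l) * FF r \<alpha> k s - (\<Sum>L\<in>?P. \<alpha> l (L l) * TT r \<alpha> k s L))"
  proof (rule sum.cong[OF refl])
    fix l assume l: "l \<in> {1..r-1}"
    show "\<alpha> l (s l) * FF r \<alpha> k (s(l := s l - 1)) = \<alpha> l (s l) * FF r \<alpha> k s - (\<Sum>L\<in>?P. \<alpha> l (L l) * TT r \<alpha> k s L)"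
      using step_j[OF l, of s] by linarith
  qed
  also have "\<dots> = (\<Sum>l\<in>{1..r-1}. \<alpha> l (s l)) * FF r \<alpha> k s - (\<Sum>L\<in>?P. sig r \<alpha> L * TT r \<alpha> k s L)"
    unfolding sum_subtractf sig_def sum_distrib_right by (subst sum.swap) simp
  finally have A: "(\<Sum>l\<in>{1..r-1}. \<alpha> l (s l) * FF r \<alpha> k (s(l := s l - 1))) =
     (\<Sum>l\<in>{1..r-1}. \<alpha> l (s l)) * FF r \<alpha> k s - (\<Sum>L\<in>?P. sig r \<alpha> L * TT r \<alpha> k s L)" .
  show ?thesis unfolding spl sum.insert[OF finite_atLeastAtMost rn] A step_r[of s, OF sr]
    by (simp add: algebra_simps)
qed

lemma main:
  "(\<Sum>j\<in>{1..r}. s j) \<le> m \<Longrightarrow>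
   urn_absorb r \<alpha> m s (\<lambda>s. \<forall>j\<in>{1..r-1}. s j = k j) = FF r \<alpha> k s"
proof (induction m arbitrary: s)
  case 0
  hence "s r = 0" using r2 by auto
  thus ?case by (simp add: stop_r)
next
  case (Suc m)
  show ?case
  proof (cases "urn_stopped r s")
    case True
    have e: "urn_absorb r \<alpha> (Suc m) s (\<lambda>s. \<forall>j\<in>{1..r-1}. s j = k j) = (if \<forall>j\<in>{1..r-1}. s j = k j then 1 else 0)"
      using True by simp
    from True have "s r = 0 \<or> (\<forall>j\<in>{1..r-1}. s j = 0)" by (simp add: urn_stopped_def)
    thus ?thesis
    proof
      assume "s r = 0" thus ?thesis using e stop_r by simp
    next
      assume z: "\<forall>j\<in>{1..r-1}. s j = 0"
      show ?thesis unfolding e stop_all[OF z] using z by auto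
    qed
  next
    case False
    hence sr: "s r \<ge> 1" unfolding urn_stopped_def by auto
    have rr: "r \<in> {1..r}" using r2 by auto
    define W where "W = (\<Sum>j\<in>{1..r}. \<alpha> j (s j))"
    have Wpos: "W > 0"
    proof -
      have "W = \<alpha> r (s r) + (\<Sum>j\<in>{1..r}-{r}. \<alpha> j (s j))"
        unfolding W_def by (rule sum.remove[OF finite_atLeastAtMost rr])
      moreover have "\<alpha> r (s r) > 0" using pos[OF rr] sr by simp
      moreover have "(\<Sum>j\<in>{1..r}-{r}. \<alpha> j (s j)) \<ge> 0" by (intro sum_nonneg) (auto intro: nonneg)
      ultimately show ?thesis by linarith
    qed
    have "urn_absorb r \<alpha> (Suc m) s (\<lambda>s. \<forall>j\<in>{1..r-1}. s j = k j)
        = (\<Sum>l\<in>{1..r}. \<alpha> l (s l) / W * FF r \<alpha> k (s(l := s l - 1)))"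
      unfolding urn_absorb.simps if_not_P[OF False] W_def[symmetric]
    proof (rule sum.cong[OF refl])
      fix l assume l: "l \<in> {1..r}"
      show "\<alpha> l (s l) / W * urn_absorb r \<alpha> m (s(l := s l - 1)) (\<lambda>s. \<forall>j\<in>{1..r-1}. s j = k j)
          = \<alpha> l (s l) / W * FF r \<alpha> k (s(l := s l - 1))"
      proof (cases "s l = 0")
        case True thus ?thesis using a0[OF l] by simp
      next
        case False
        have "(\<Sum>j\<in>{1..r}. (s(l := s l - 1)) j) = (s l - 1) + (\<Sum>j\<in>{1..r}-{l}. s j)"
          using sum.remove[OF finite_atLeastAtMost l, of "s(l := s l - 1)"] by simp
        moreover have "(\<Sum>j\<in>{1..r}. s j) = s l + (\<Sum>j\<in>{1..r}-{l}. s j)"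
          by (rule sum.remove[OF finite_atLeastAtMost l])
        ultimately have le: "(\<Sum>j\<in>{1..r}. (s(l := s l - 1)) j) \<le> m" using Suc.prems False by linarith
        show ?thesis by (subst Suc.IH[OF le]) (rule refl)
      qed
    qed
    also have "\<dots> = (\<Sum>l\<in>{1..r}. \<alpha> l (s l) * FF r \<alpha> k (s(l := s l - 1))) / W"
      by (simp add: sum_divide_distrib)
    also have "\<dots> = FF r \<alpha> k s" unfolding recur[of s, OF sr] W_def[symmetric] using Wpos by simp
    finally show ?thesis .
  qed
qed

end

theorem theorem3:
  fixes r :: nat and \<alpha> :: "nat \<Rightarrow> nat \<Rightarrow> real" and n k :: "nat \<Rightarrow> nat"
  assumes "r \<ge> 2"
    and "\<And>j h. j \<in> {1..r} \<Longrightarrow> h \<ge> 1 \<Longrightarrow> \<alpha> j h > 0"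
    and "\<And>j h l. j \<in> {1..r} \<Longrightarrow> 1 \<le> h \<Longrightarrow> h < l \<Longrightarrow> \<alpha> j h \<noteq> \<alpha> j l"
    and "\<And>j. j \<in> {1..r} \<Longrightarrow> \<alpha> j 0 = 0"
    and "\<And>j. j \<in> {1..r} \<Longrightarrow> n j \<ge> 1"
    and "\<And>j. j \<in> {1..r-1} \<Longrightarrow> k j \<le> n j"
  shows "urn_prob_X r \<alpha> n k =
    (\<Sum>L\<in>Pi\<^sub>E {1..r-1} (\<lambda>j. {k j..n j}).
       ((\<Prod>f\<in>{1..n r}. \<alpha> r f) * (\<Prod>j\<in>{1..r-1}. \<Prod>h\<in>{k j+1..n j}. \<alpha> j h))
       / ((\<Prod>f\<in>{1..n r}. \<alpha> r f + (\<Sum>j\<in>{1..r-1}. \<alpha> j (L j)))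
          * (\<Prod>j\<in>{1..r-1}. \<Prod>h\<in>{k j..n j} - {L j}. \<alpha> j h - \<alpha> j (L j))))"
proof -
  have "urn_prob_X r \<alpha> n k = FF r \<alpha> k n"
    unfolding urn_prob_X_def by (rule main) (use assms in auto)
  thus ?thesis unfolding FF_def TT_def AA_def DD_def NN_def QQ_def sig_def .
qed

end
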